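(* Let $\mathtt{r}:[\omega]^2\to\omega$ be a function (writing $\mathtt{r}(k,l)$ for $\mathtt{r}(\{k,l\})$ with $k<l$) such that for all $k<l<m$ in $\omega$: (i) $\mathtt{r}(k,m)\neq\mathtt{r}(l,m)$; (ii) $\mathtt{r}(k,l)\le\max\{\mathtt{r}(k,m),\mathtt{r}(l,m)\}$; (iii) $\mathtt{r}(k,m)\le\max\{\mathtt{r}(k,l),\mathtt{r}(l,m)\}$. Let $X$ be a topological space and $(x_n)_{n\in\omega}$ a sequence of pairwise distinct points of $X$ such that the subspace $\{x_n:n\in\omega\}$ is homeomorphic to $\mathbb{Q}$, and fix a metric $d$ on $\{x_n:n\in\omega\}$ compatible with its subspace topology. Call $A\subseteq\omega$ scattered if there is no $B\subseteq A$ with $\{x_n:n\in B\}$ homeomorphic to $\mathbb{Q}$; let $\mathcal{I}$ be the family of scattered subsets of $\omega$ and $\mathcal{I}^+=\mathcal{P}(\omega)\setminus\mathcal{I}$. For $i,j\in\omega$ let $A_{i,j}=\{n\in\omega: d(x_n,x_i)<\frac{1}{j+1}\}$. Then for every $A\in\mathcal{I}^+$ there exists a nonempty $B\subseteq A$ such that $B$ is $\mathtt{r}$-shift-increasing and for all $i\in B$ and $j\in\omega$ there is $n\in B\cap A_{i,j}$ with $n\neq i$.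
   Context: $[\omega]^2$ is the set of two-element subsets of $\omega$. A set $B\subseteq\omega$ is $\mathtt{r}$-shift-increasing if for all $k,l,m\in B$ with $k<l<m$, $\mathtt{r}(k,l)\le\mathtt{r}(l,m)$. $\mathbb{Q}$ carries its usual topology. *)

theory Defs
  imports "HOL-Analysis.Analysis"
begin

text \<open>A function r on two-element subsets of nat is represented by r k l for k < l.\<close>

definition shift_increasing :: "(nat \<Rightarrow> nat \<Rightarrow> nat) \<Rightarrow> nat set \<Rightarrow> bool" where
  "shift_increasing r B \<longleftrightarrow>
     (\<forall>k\<in>B. \<forall>l\<in>B. \<forall>m\<in>B. k < l \<and> l < m \<longrightarrow> r k l \<le> r l m)"

abbreviation rat_topology :: "real topology" where
  "rat_topology \<equiv> subtopology euclideanreal \<rat>"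

definition scattered_idx :: "'a topology \<Rightarrow> (nat \<Rightarrow> 'a) \<Rightarrow> nat set \<Rightarrow> bool" where
  "scattered_idx X x A \<longleftrightarrow>
     \<not> (\<exists>B \<subseteq> A. subtopology X (x ` B) homeomorphic_space rat_topology)"

end

theory Submission
  imports Defs "HOL-Library.Nat_Bijection"
begin



locale sfix =
  fixes r :: "nat \<Rightarrow> nat \<Rightarrow> nat" and dl :: "nat \<Rightarrow> nat \<Rightarrow> real"
  assumes r1: "\<And>k l m. k < l \<Longrightarrow> l < m \<Longrightarrow> r k m \<noteq> r l m"
    and r2: "\<And>k l m. k < l \<Longrightarrow> l < m \<Longrightarrow> r k l \<le> max (r k m) (r l m)"
    and r3: "\<And>k l m. k < l \<Longrightarrow> l < m \<Longrightarrow> r k m \<le> max (r k l) (r l m)"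
    and dsym: "\<And>a b. dl a b = dl b a"
    and dtri: "\<And>a b c. dl a c \<le> dl a b + dl b c"
    and dpos: "\<And>a b. a \<noteq> b \<Longrightarrow> 0 < dl a b"
    and dnn: "\<And>a b. 0 \<le> dl a b"
    and drefl: "\<And>a. dl a a = 0"
begin

definition crowd :: "nat set \<Rightarrow> bool" where
  "crowd C \<longleftrightarrow> (\<forall>p\<in>C. \<forall>e>0. \<exists>q\<in>C. q \<noteq> p \<and> dl p q < e)"

definition inK :: "nat set \<Rightarrow> nat \<Rightarrow> bool" where
  "inK G p \<longleftrightarrow> (\<exists>C\<subseteq>G. crowd C \<and> p \<in> C)"

lemma crowd_inf:
  assumes "crowd C" "p \<in> C" "e > 0" "finite S"
  shows "\<exists>q\<in>C. q \<noteq> p \<and> q \<notin> S \<and> dl p q < e"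
proof -
  define e' where "e' = Min (insert e ((\<lambda>s. dl p s) ` (S - {p})))"
  have fin: "finite (insert e ((\<lambda>s. dl p s) ` (S - {p})))" using assms(4) by auto
  have "e' > 0" unfolding e'_def using fin assms(3) dpos by (auto simp: Min_gr_iff)
  then obtain q where q: "q \<in> C" "q \<noteq> p" "dl p q < e'" using assms(1,2) unfolding crowd_def by blast
  have "e' \<le> e" unfolding e'_def using fin by simp
  moreover have "q \<notin> S"
  proof
    assume "q \<in> S"
    then have "e' \<le> dl p q" unfolding e'_def using fin q(2) by (intro Min_le) auto
    then show False using q(3) by simp
  qed
  ultimately show ?thesis using q by auto
qed

lemma crowd_diff: assumes "crowd C" "finite S" shows "crowd (C - S)"
  unfolding crowd_def
proof (intro ballI allI impI)
  fix p and e :: real assume "p \<in> C - S" "e > 0"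
  then obtain q where "q \<in> C" "q \<noteq> p" "q \<notin> S" "dl p q < e" using crowd_inf[OF assms(1) _ _ assms(2)] by blast
  then show "\<exists>q\<in>C - S. q \<noteq> p \<and> dl p q < e" by blast
qed

lemma crowd_Union: "(\<And>C. C \<in> CC \<Longrightarrow> crowd C) \<Longrightarrow> crowd (\<Union>CC)"
  unfolding crowd_def by (auto, blast)

lemma crowd_ball:
  assumes "crowd C" shows "crowd (C \<inter> {y. dl p y < e})"
  unfolding crowd_def
proof (intro ballI allI impI)
  fix q and e0 :: real assume q: "q \<in> C \<inter> {y. dl p y < e}" and e0: "e0 > 0"
  then obtain q' where q': "q' \<in> C" "q' \<noteq> q" "dl q q' < min e0 (e - dl p q)"
    using assms unfolding crowd_def by (metis IntD1 IntD2 diff_gt_0_iff_gt mem_Collect_eq min_less_iff_conj)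
  have "dl p q' \<le> dl p q + dl q q'" by (rule dtri)
  then show "\<exists>q'\<in>C \<inter> {y. dl p y < e}. q' \<noteq> q \<and> dl q q' < e0" using q' by (intro bexI[of _ q']) auto
qed

lemma split_lemma:
  assumes C: "crowd C" "p \<in> C" "C \<subseteq> G1 \<union> G2" and p: "p \<in> G1" "p \<in> G2"
  shows "inK G1 p \<or> inK G2 p"
proof (rule ccontr)
  assume nK: "\<not> (inK G1 p \<or> inK G2 p)"
  have far: "\<exists>e>0. \<forall>C'\<subseteq>G. crowd C' \<longrightarrow> (\<forall>q\<in>C'. e \<le> dl p q)" if G: "p \<in> G" "\<not> inK G p" for G
  proof (rule ccontr)
    assume nt: "\<not> ?thesis"
    define K where "K = \<Union>{C'. C' \<subseteq> G \<and> crowd C'}"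
    have cK: "crowd K" unfolding K_def by (rule crowd_Union) auto
    have "p \<notin> K" using G unfolding K_def inK_def by blast
    have near: "\<forall>e>0. \<exists>q\<in>K. dl p q < e" using nt unfolding K_def by (auto simp: not_le)
    have "crowd (insert p K)" unfolding crowd_def
    proof (intro ballI allI impI)
      fix q and e :: real assume "q \<in> insert p K" "e > 0"
      then show "\<exists>q'\<in>insert p K. q' \<noteq> q \<and> dl q q' < e"
      proof (elim insertE)
        assume "q = p" then show ?thesis using near \<open>e>0\<close> \<open>p \<notin> K\<close> by (metis insertI2)
      next
        assume "q \<in> K" then show ?thesis using cK \<open>e>0\<close> unfolding crowd_def by blast
      qed
    qed
    moreover have "insert p K \<subseteq> G" using G unfolding K_def by auto
    ultimately show False using G unfolding inK_def by blast
  qed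
  obtain e1 where e1: "e1 > 0" "\<forall>C'\<subseteq>G1. crowd C' \<longrightarrow> (\<forall>q\<in>C'. e1 \<le> dl p q)" using far p nK by blast
  obtain e2 where e2: "e2 > 0" "\<forall>C'\<subseteq>G2. crowd C' \<longrightarrow> (\<forall>q\<in>C'. e2 \<le> dl p q)" using far p nK by blast
  define e where "e = min e1 e2"
  define C' where "C' = C \<inter> {y. dl p y < e}"
  have cC': "crowd C'" unfolding C'_def by (rule crowd_ball[OF C(1)])
  have pC': "p \<in> C'" unfolding C'_def e_def using C(2) e1 e2 by (simp add: drefl)
  define A where "A = C' \<inter> G1"
  show False
  proof (cases "\<exists>q\<in>C'. \<exists>\<rho>>0. \<forall>a\<in>A. \<rho> \<le> dl q a")
    case True
    then obtain q \<rho> where q: "q \<in> C'" "\<rho> > 0" "\<forall>a\<in>A. \<rho> \<le> dl q a" by blast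
    define C'' where "C'' = C' \<inter> {y. dl q y < \<rho>}"
    have "crowd C''" unfolding C''_def by (rule crowd_ball[OF cC'])
    moreover have "C'' \<subseteq> G2" using q C(3) unfolding C''_def A_def C'_def by (fastforce simp: not_le[symmetric])
    moreover have "q \<in> C''" unfolding C''_def using q by (simp add: drefl)
    ultimately have "e2 \<le> dl p q" using e2 by blast
    moreover have "dl p q < e" using q(1) unfolding C'_def by simp
    ultimately show False unfolding e_def by simp
  next
    case False
    then have dense: "\<forall>q\<in>C'. \<forall>\<rho>>0. \<exists>a\<in>A. dl q a < \<rho>" by (meson not_le)
    have "crowd A" unfolding crowd_def
    proof (intro ballI allI impI)
      fix a and \<epsilon> :: real assume a: "a \<in> A" "\<epsilon> > 0"
      then have "a \<in> C'" unfolding A_def by simp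
      then obtain q where q: "q \<in> C'" "q \<noteq> a" "dl a q < \<epsilon>/2" using cC' a(2) unfolding crowd_def
        by (meson half_gt_zero)
      have "min (\<epsilon>/2) (dl a q) > 0" using a(2) dpos q(2) by (simp add: dpos)
      then obtain a' where a': "a' \<in> A" "dl q a' < min (\<epsilon>/2) (dl a q)" using dense q(1) by blast
      have "a' \<noteq> a" using a' dsym[of q a] by auto
      moreover have "dl a a' \<le> dl a q + dl q a'" by (rule dtri)
      ultimately show "\<exists>a'\<in>A. a' \<noteq> a \<and> dl a a' < \<epsilon>" using a' q by (intro bexI[of _ a']) auto
    qed
    moreover have "A \<subseteq> G1" unfolding A_def by simp
    moreover have "p \<in> A" unfolding A_def using pC' p by simp
    ultimately have "e1 \<le> dl p p" using e1 by blast
    moreover have "dl p p < e" using pC' unfolding C'_def by simp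
    ultimately show False unfolding e_def by simp
  qed
qed

end


context sfix begin

definition Bad :: "nat set \<Rightarrow> nat \<Rightarrow> nat \<Rightarrow> nat set" where
  "Bad D k m = {m'\<in>D. m < m' \<and> r m m' < r k m}"
definition Pd :: "nat set \<Rightarrow> nat \<Rightarrow> nat \<Rightarrow> nat set" where
  "Pd D k m = {l\<in>D. k < l \<and> l < m \<and> r l m < r k l}"
definition sg :: "nat set \<Rightarrow> nat \<Rightarrow> nat \<Rightarrow> bool" where
  "sg D k m \<longleftrightarrow> (\<exists>\<rho>>0. \<forall>m'\<in>Bad D k m. \<rho> \<le> dl m m')"

lemma tri_lem: "a < b \<Longrightarrow> b < c \<Longrightarrow> r a b \<le> r b c \<Longrightarrow> r a c < r b c"
  using r3[of a b c] r1[of a b c] by (simp add: max_def split: if_splits)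

lemma tri_lem2: "a < b \<Longrightarrow> b < c \<Longrightarrow> r a c < r b c \<Longrightarrow> r a b \<le> r b c"
  using r2[of a b c] by (simp add: max_def split: if_splits)

lemma class_lem: "k < m \<Longrightarrow> m < m' \<Longrightarrow> r m m' < r k m \<Longrightarrow> r k m' = r k m"
  using r2[of k m m'] r3[of k m m'] by (simp add: max_def split: if_splits)

lemma Pd_fin: "finite (Pd D k m)"
  unfolding Pd_def by (rule finite_subset[of _ "{..<m}"]) auto

lemma Pd_sub:
  assumes "k < m" "m \<in> D" "m' \<in> Bad D k m"
  shows "insert m (Pd D k m) \<subseteq> Pd D k m'"
proof
  fix l assume l: "l \<in> insert m (Pd D k m)"
  have m': "m < m'" "r m m' < r k m" "m' \<in> D" using assms(3) unfolding Bad_def by auto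
  show "l \<in> Pd D k m'"
  proof (cases "l = m")
    case True then show ?thesis using assms m' unfolding Pd_def by auto
  next
    case False
    then have l': "l \<in> D" "k < l" "l < m" "r l m < r k l" using l unfolding Pd_def by auto
    have "r k m = r k l" using class_lem[OF l'(2,3,4)] .
    moreover have "r l m' \<le> max (r l m) (r m m')" using r3[OF l'(3) m'(1)] .
    ultimately have "r l m' < r k l" using l'(4) m'(2) by simp
    then show ?thesis using l' m' unfolding Pd_def by auto
  qed
qed

lemma Pd_card_lt:
  assumes "k < m" "m \<in> D" "m' \<in> Bad D k m"
  shows "card (Pd D k m) < card (Pd D k m')"
proof -
  have "m \<notin> Pd D k m" unfolding Pd_def by auto
  then have "card (insert m (Pd D k m)) = Suc (card (Pd D k m))" using Pd_fin by simp
  moreover have "card (insert m (Pd D k m)) \<le> card (Pd D k m')"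
    by (rule card_mono[OF Pd_fin Pd_sub[OF assms]])
  ultimately show ?thesis by simp
qed

lemma Pd_card_le:
  assumes "k < m"
  shows "card (Pd D k m) \<le> r k m"
proof -
  have "inj_on (\<lambda>l. r l m) (Pd D k m)"
  proof (rule inj_onI)
    fix a b assume ab: "a \<in> Pd D k m" "b \<in> Pd D k m" "r a m = r b m"
    show "a = b"
    proof (rule ccontr)
      assume "a \<noteq> b"
      then have "a < b \<or> b < a" by arith
      then show False using ab r1[of a b m] r1[of b a m] unfolding Pd_def by auto
    qed
  qed
  moreover have "(\<lambda>l. r l m) ` Pd D k m \<subseteq> {..< r k m}"
  proof
    fix y assume "y \<in> (\<lambda>l. r l m) ` Pd D k m"
    then obtain l where l: "l \<in> D" "k < l" "l < m" "r l m < r k l" "y = r l m" unfolding Pd_def by auto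
    then show "y \<in> {..< r k m}" using class_lem[OF l(2,3,4)] by simp
  qed
  ultimately show ?thesis using card_inj_on_le[of "\<lambda>l. r l m" "Pd D k m" "{..< r k m}"] by simp
qed

lemma Bad_class: "k < m \<Longrightarrow> m' \<in> Bad D k m \<Longrightarrow> r k m' = r k m"
  unfolding Bad_def using class_lem by auto

lemma disj_lem:
  assumes "k < m1" "m1 < m2" "m1 \<in> D" "m2 \<in> D" "r k m1 \<noteq> r k m2 \<or> card (Pd D k m1) = card (Pd D k m2)"
  shows "Bad D k m1 \<inter> Bad D k m2 = {}"
proof (rule ccontr)
  assume "Bad D k m1 \<inter> Bad D k m2 \<noteq> {}"
  then obtain z where z: "z \<in> Bad D k m1" "z \<in> Bad D k m2" by blast
  have e1: "r k z = r k m1" using Bad_class[OF assms(1) z(1)] .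
  have e2: "r k z = r k m2" using Bad_class[OF _ z(2)] assms by simp
  have zz: "m2 < z" "r m1 z < r k m1" "r m2 z < r k m2" using z unfolding Bad_def by auto
  have "r m1 m2 \<le> max (r m1 z) (r m2 z)" using r2[OF assms(2) zz(1)] .
  then have "r m1 m2 < r k m1" using zz e1 e2 by simp
  then have "m2 \<in> Bad D k m1" using assms unfolding Bad_def by simp
  then have "card (Pd D k m1) < card (Pd D k m2)" using Pd_card_lt assms by blast
  then show False using assms(5) e1 e2 by simp
qed

lemma disj_lem2:
  assumes "k < m1" "k < m2" "m1 \<noteq> m2" "m1 \<in> D" "m2 \<in> D"
    "r k m1 \<noteq> r k m2 \<or> card (Pd D k m1) = card (Pd D k m2)"
  shows "Bad D k m1 \<inter> Bad D k m2 = {}"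
proof (cases "m1 < m2")
  case True then show ?thesis using disj_lem assms by blast
next
  case False then have "m2 < m1" using assms(3) by arith
  then show ?thesis using disj_lem[of k m2 m1 D] assms by (metis inf_commute)
qed

lemma descent:
  assumes "m0 \<in> D" "k < m0" "dl p m0 < e"
  shows "\<exists>m\<in>D. m0 \<le> m \<and> dl p m < e \<and> sg D k m"
  using assms
proof (induction "r k m0 - card (Pd D k m0)" arbitrary: m0 rule: less_induct)
  case less
  show ?case
  proof (cases "sg D k m0")
    case True then show ?thesis using less.prems by blast
  next
    case False
    have "e - dl p m0 > 0" using less.prems by simp
    then obtain m1 where m1: "m1 \<in> Bad D k m0" "dl m0 m1 < e - dl p m0"
      using False unfolding sg_def by (meson not_le)
    have m1': "m1 \<in> D" "m0 < m1" using m1 unfolding Bad_def by auto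
    have "dl p m1 \<le> dl p m0 + dl m0 m1" by (rule dtri)
    then have d1: "dl p m1 < e" using m1 by simp
    have c1: "r k m1 = r k m0" using Bad_class[OF less.prems(2) m1(1)] .
    have c2: "card (Pd D k m0) < card (Pd D k m1)" using Pd_card_lt[OF less.prems(2,1) m1(1)] .
    have c3: "card (Pd D k m1) \<le> r k m1" using Pd_card_le less.prems(2) m1' by simp
    have "r k m1 - card (Pd D k m1) < r k m0 - card (Pd D k m0)" using c1 c2 c3 by simp
    then obtain m where "m\<in>D" "m1 \<le> m" "dl p m < e" "sg D k m"
      using less.hyps[of m1] m1' d1 less.prems(2) by force
    then show ?thesis using m1' by (intro bexI[of _ m]) auto
  qed
qed

end


context sfix begin

lemma find_T:
  assumes M: "infinite M" "\<And>m. m \<in> M \<Longrightarrow> m \<in> D \<and> k < m"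
  shows "\<exists>T\<subseteq>M. finite T \<and> card T = n \<and> (\<forall>a\<in>T. \<forall>b\<in>T. a \<noteq> b \<longrightarrow> Bad D k a \<inter> Bad D k b = {})"
proof (cases "finite ((\<lambda>m. r k m) ` M)")
  case False
  then obtain W where W: "finite W" "card W = n" "W \<subseteq> (\<lambda>m. r k m) ` M"
    using infinite_arbitrarily_large by blast
  define T where "T = inv_into M (\<lambda>m. r k m) ` W"
  have "T \<subseteq> M" unfolding T_def using W(3) by (auto intro: inv_into_into)
  moreover have "card T = n" unfolding T_def using W inj_on_inv_into[OF W(3)] by (simp add: card_image)
  moreover have "finite T" unfolding T_def using W by simp
  moreover have "\<forall>a\<in>T. \<forall>b\<in>T. a \<noteq> b \<longrightarrow> Bad D k a \<inter> Bad D k b = {}"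
  proof (intro ballI impI)
    fix a b assume ab: "a \<in> T" "b \<in> T" "a \<noteq> b"
    have "r k a \<noteq> r k b"
    proof
      assume eq: "r k a = r k b"
      obtain w1 where w1: "w1 \<in> W" "a = inv_into M (\<lambda>m. r k m) w1" using ab(1) unfolding T_def by auto
      obtain w2 where w2: "w2 \<in> W" "b = inv_into M (\<lambda>m. r k m) w2" using ab(2) unfolding T_def by auto
      have "r k a = w1" using w1 W(3) f_inv_into_f[of w1 "\<lambda>m. r k m" M] by auto
      moreover have "r k b = w2" using w2 W(3) f_inv_into_f[of w2 "\<lambda>m. r k m" M] by auto
      ultimately show False using eq w1 w2 ab(3) by simp
    qed
    then show "Bad D k a \<inter> Bad D k b = {}" using disj_lem2 ab \<open>T \<subseteq> M\<close> M(2) by blast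
  qed
  ultimately show ?thesis by blast
next
  case True
  define key where "key m = (r k m, card (Pd D k m))" for m
  have "key ` M \<subseteq> ((\<lambda>m. r k m) ` M) \<times> {..Max ((\<lambda>m. r k m) ` M)}"
  proof
    fix z assume "z \<in> key ` M"
    then obtain m where m: "m \<in> M" "z = key m" by auto
    have "card (Pd D k m) \<le> r k m" using Pd_card_le M(2)[OF m(1)] by simp
    also have "r k m \<le> Max ((\<lambda>m. r k m) ` M)" using True m(1) by simp
    finally show "z \<in> ((\<lambda>m. r k m) ` M) \<times> {..Max ((\<lambda>m. r k m) ` M)}" using m unfolding key_def by auto
  qed
  then have "finite (key ` M)" using True by (meson finite_SigmaI finite_atMost finite_subset)
  then obtain a0 where a0: "a0 \<in> M" "infinite {a\<in>M. key a = key a0}"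
    using pigeonhole_infinite[OF M(1)] by blast
  then obtain T where T: "finite T" "card T = n" "T \<subseteq> {a\<in>M. key a = key a0}"
    using infinite_arbitrarily_large by blast
  have "\<forall>a\<in>T. \<forall>b\<in>T. a \<noteq> b \<longrightarrow> Bad D k a \<inter> Bad D k b = {}"
  proof (intro ballI impI)
    fix a b assume ab: "a \<in> T" "b \<in> T" "a \<noteq> b"
    have "a \<in> {a\<in>M. key a = key a0}" "b \<in> {a\<in>M. key a = key a0}" using T(3) ab by blast+
    then have "key a = key b" "a \<in> M" "b \<in> M" by auto
    then show "Bad D k a \<inter> Bad D k b = {}" using disj_lem2[of k a b D] ab M(2) unfolding key_def by auto
  qed
  then show ?thesis using T by blast
qed

lemma extend_lem:
  assumes F: "finite F" "F \<noteq> {}" and si1: "shift_increasing r (insert t F)"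
    and si2: "shift_increasing r (insert m' F)" and o: "Max F < t" "t < m'"
    and nb: "r (Max F) t \<le> r t m'"
  shows "shift_increasing r (insert m' (insert t F))"
  unfolding shift_increasing_def
proof (intro ballI impI)
  fix a b c assume abc: "a \<in> insert m' (insert t F)" "b \<in> insert m' (insert t F)"
    "c \<in> insert m' (insert t F)" "a < b \<and> b < c"
  have le: "\<And>q. q \<in> F \<Longrightarrow> q \<le> Max F" using F by simp
  have MF: "Max F \<in> F" using F by simp
  show "r a b \<le> r b c"
  proof (cases "c = m'")
    case c: True
    show ?thesis
    proof (cases "b = t")
      case b: True
      then have aF: "a \<in> F" using abc o by auto
      show ?thesis
      proof (cases "a = Max F")
        case True then show ?thesis using nb b c by simp
      next
        case False
        then have "a < Max F" using le[OF aF] by simp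
        then have "r a (Max F) \<le> r (Max F) t" using si1 MF aF o unfolding shift_increasing_def by blast
        then have "r a t < r (Max F) t" using tri_lem[of a "Max F" t] \<open>a < Max F\<close> o by simp
        then show ?thesis using nb b c by simp
      qed
    next
      case b: False
      then have "b \<in> F" using abc o c by auto
      then have "a \<in> F" using abc le o by fastforce
      then show ?thesis using si2 \<open>b \<in> F\<close> abc c unfolding shift_increasing_def by blast
    qed
  next
    case c: False
    then have "c \<in> insert t F" using abc by auto
    then have "c \<le> t" using le o by fastforce
    then have "a \<in> insert t F" "b \<in> insert t F" using abc o by auto
    then show ?thesis using si1 \<open>c \<in> insert t F\<close> abc unfolding shift_increasing_def by blast
  qed
qed

end


context sfix begin

definition good_st :: "nat set \<Rightarrow> nat set \<Rightarrow> nat set \<Rightarrow> bool" where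
  "good_st A0 F D \<longleftrightarrow> finite F \<and> F \<noteq> {} \<and> F \<subseteq> D \<and> D \<subseteq> A0 \<and> crowd D \<and> shift_increasing r F \<and>
     (\<forall>m\<in>D-F. Max F < m \<and> shift_increasing r (insert m F))"

lemma step_lem:
  assumes G: "good_st A0 F D" and p: "p \<in> F" and e: "e > 0"
  shows "\<exists>m D'. m \<in> D - F \<and> dl p m < e \<and> good_st A0 (insert m F) D'"
proof -
  define k where "k = Max F"
  have F: "finite F" "F \<noteq> {}" "F \<subseteq> D" "D \<subseteq> A0" "crowd D" "shift_increasing r F"
    using G unfolding good_st_def by auto
  have Dk: "\<And>m. m \<in> D - F \<Longrightarrow> k < m \<and> shift_increasing r (insert m F)"
    using G unfolding good_st_def k_def by blast
  have kF: "\<And>q. q \<in> F \<Longrightarrow> q \<le> k" unfolding k_def using F by simp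
  define M where "M = {m \<in> D - F. dl p m < e \<and> sg D k m}"
  have "\<forall>N. \<exists>m>N. m \<in> M"
  proof
    fix N
    obtain q where q: "q \<in> D" "q \<noteq> p" "q \<notin> F \<union> {..N}" "dl p q < e"
      using crowd_inf[OF F(5), of p e "F \<union> {..N}"] p F e by blast
    then have "k < q" using Dk by blast
    then obtain m where m: "m \<in> D" "q \<le> m" "dl p m < e" "sg D k m" using descent[OF q(1) _ q(4)] by blast
    then have "m \<notin> F" using kF \<open>k < q\<close> by fastforce
    then show "\<exists>m>N. m \<in> M" using m q unfolding M_def by (intro exI[of _ m]) auto
  qed
  then have infM: "infinite M" using infinite_nat_iff_unbounded by blast
  have Mk: "\<And>m. m \<in> M \<Longrightarrow> m \<in> D \<and> k < m" unfolding M_def using Dk by blast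
  obtain T where T: "T \<subseteq> M" "finite T" "card T = Suc (card F)"
    "\<forall>a\<in>T. \<forall>b\<in>T. a \<noteq> b \<longrightarrow> Bad D k a \<inter> Bad D k b = {}"
    using find_T[OF infM Mk] by blast
  define Fail where "Fail q = {t\<in>T. \<not> inK (D - Bad D k t) q}" for q
  have notBad: "q \<notin> Bad D k t" if "q \<in> F" "t \<in> T" for q t
    using that kF Mk T(1) unfolding Bad_def by fastforce
  have c1: "card (Fail q) \<le> 1" if q: "q \<in> F" for q
  proof -
    have "finite (Fail q)" unfolding Fail_def using T(2) by simp
    moreover have "\<forall>a1\<in>Fail q. \<forall>a2\<in>Fail q. a1 = a2"
    proof (intro ballI, rule ccontr)
      fix a1 a2 assume a: "a1 \<in> Fail q" "a2 \<in> Fail q" "a1 \<noteq> a2"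
      then have aT: "a1 \<in> T" "a2 \<in> T" unfolding Fail_def by auto
      have "D \<subseteq> (D - Bad D k a1) \<union> (D - Bad D k a2)" using T(4) aT a(3) by blast
      moreover have "q \<in> D - Bad D k a1" "q \<in> D - Bad D k a2" using notBad q aT F(3) by blast+
      ultimately have "inK (D - Bad D k a1) q \<or> inK (D - Bad D k a2) q"
        using split_lemma[OF F(5)] by blast
      then show False using a unfolding Fail_def by blast
    qed
    ultimately show ?thesis using card_le_Suc0_iff_eq[of "Fail q"] by simp
  qed
  have "card (\<Union>q\<in>F. Fail q) \<le> (\<Sum>q\<in>F. card (Fail q))" using card_UN_le F(1) by blast
  also have "\<dots> \<le> card F" using sum_bounded_above[of F "\<lambda>q. card (Fail q)" 1] c1 by simp
  finally have "card (\<Union>q\<in>F. Fail q) < card T" using T(3) by simp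
  moreover have "finite (\<Union>q\<in>F. Fail q)" using F(1) T(2) unfolding Fail_def by auto
  ultimately have "\<not> T \<subseteq> (\<Union>q\<in>F. Fail q)" using card_mono[of "\<Union>q\<in>F. Fail q" T] by linarith
  then obtain t where t: "t \<in> T" "\<forall>q\<in>F. t \<notin> Fail q" by blast
  have tM: "t \<in> D - F" "dl p t < e" "sg D k t" using t T(1) unfolding M_def by auto
  have kt: "k < t" "shift_increasing r (insert t F)" using Dk tM(1) by auto
  obtain \<rho> where \<rho>: "\<rho> > 0" "\<forall>m'\<in>Bad D k t. \<rho> \<le> dl t m'" using tM(3) unfolding sg_def by blast
  have "\<forall>q\<in>F. \<exists>C. C \<subseteq> D - Bad D k t \<and> crowd C \<and> q \<in> C"
    using t unfolding Fail_def inK_def by blast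
  then obtain Cf where Cf: "\<And>q. q \<in> F \<Longrightarrow> Cf q \<subseteq> D - Bad D k t \<and> crowd (Cf q) \<and> q \<in> Cf q"
    using bchoice[of F "\<lambda>q C. C \<subseteq> D - Bad D k t \<and> crowd C \<and> q \<in> C"] by blast
  define Ct where "Ct = D \<inter> {y. dl t y < \<rho>}"
  have Ct: "Ct \<subseteq> D - Bad D k t" "crowd Ct" "t \<in> Ct"
    using \<rho> tM(1) crowd_ball[OF F(5)] unfolding Ct_def by (fastforce simp: drefl)+
  define S where "S = {y\<in>D-F. y < t}"
  have finS: "finite S" unfolding S_def by (rule finite_subset[of _ "{..<t}"]) auto
  define D' where "D' = \<Union>(insert (Ct - S) ((\<lambda>q. Cf q - S) ` F))"
  have cD': "crowd D'" unfolding D'_def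
    using crowd_diff[OF _ finS] Ct Cf by (intro crowd_Union) auto
  have D'sub: "D' \<subseteq> D - Bad D k t - S" unfolding D'_def using Ct Cf by blast
  have insD': "insert t F \<subseteq> D'" unfolding D'_def using Ct Cf unfolding S_def by blast
  have Maxt: "Max (insert t F) = t" using F kt unfolding k_def by (simp add: Max_insert)
  have rest: "\<forall>m'\<in>D' - insert t F. Max (insert t F) < m' \<and> shift_increasing r (insert m' (insert t F))"
  proof
    fix m' assume m': "m' \<in> D' - insert t F"
    then have m'': "m' \<in> D" "m' \<notin> Bad D k t" "m' \<notin> S" "m' \<notin> F" "m' \<noteq> t" using D'sub by auto
    then have "t < m'" unfolding S_def by auto
    then have nb: "r k t \<le> r t m'" using m'' unfolding Bad_def by auto
    have si2: "shift_increasing r (insert m' F)" using Dk m'' by blast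
    show "Max (insert t F) < m' \<and> shift_increasing r (insert m' (insert t F))"
      using extend_lem[OF F(1,2) kt(2) si2 _ \<open>t < m'\<close>] nb kt(1) Maxt \<open>t < m'\<close> unfolding k_def by simp
  qed
  have "good_st A0 (insert t F) D'"
    unfolding good_st_def using F insD' D'sub cD' kt(2) rest by blast
  then show ?thesis using tM by blast
qed

end


context sfix begin

definition stp :: "nat set \<Rightarrow> nat \<Rightarrow> nat list \<times> nat set \<Rightarrow> nat list \<times> nat set" where
  "stp A0 n s = (SOME s'. \<exists>m. fst s' = fst s @ [m] \<and> m \<in> snd s - set (fst s) \<and>
      dl (fst s ! fst (prod_decode n)) m < 1 / (real (snd (prod_decode n)) + 1) \<and>
      good_st A0 (set (fst s')) (snd s'))"

primrec sq :: "nat set \<Rightarrow> nat list \<times> nat set \<Rightarrow> nat \<Rightarrow> nat list \<times> nat set" where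
  "sq A0 s0 0 = s0"
| "sq A0 s0 (Suc n) = stp A0 n (sq A0 s0 n)"

lemma stp_spec:
  assumes G: "good_st A0 (set (fst s)) (snd s)" and L: "length (fst s) = Suc n"
  shows "\<exists>m. fst (stp A0 n s) = fst s @ [m] \<and> m \<in> snd s - set (fst s) \<and>
      dl (fst s ! fst (prod_decode n)) m < 1 / (real (snd (prod_decode n)) + 1) \<and>
      good_st A0 (set (fst (stp A0 n s))) (snd (stp A0 n s))"
proof -
  define i where "i = fst (prod_decode n)"
  define j where "j = snd (prod_decode n)"
  have "prod_encode (i, j) = n" unfolding i_def j_def by simp
  then have "i \<le> n" using le_prod_encode_1[of i j] by simp
  then have "fst s ! i \<in> set (fst s)" using L by simp
  moreover have "(1::real) / (real j + 1) > 0" by simp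
  ultimately obtain m D' where m: "m \<in> snd s - set (fst s)" "dl (fst s ! i) m < 1 / (real j + 1)"
    "good_st A0 (insert m (set (fst s))) D'"
    using step_lem[OF G] by blast
  have ex: "\<exists>s'. \<exists>m. fst s' = fst s @ [m] \<and> m \<in> snd s - set (fst s) \<and>
      dl (fst s ! fst (prod_decode n)) m < 1 / (real (snd (prod_decode n)) + 1) \<and>
      good_st A0 (set (fst s')) (snd s')"
    using m unfolding i_def j_def by (intro exI[of _ "(fst s @ [m], D')"]) auto
  show ?thesis unfolding stp_def by (rule someI_ex[OF ex])
qed

lemma sq_inv:
  assumes "good_st A0 (set (fst s0)) (snd s0)" "length (fst s0) = 1"
  shows "good_st A0 (set (fst (sq A0 s0 n))) (snd (sq A0 s0 n)) \<and> length (fst (sq A0 s0 n)) = Suc n"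
proof (induction n)
  case 0 then show ?case using assms by simp
next
  case (Suc n)
  then obtain m where "fst (sq A0 s0 (Suc n)) = fst (sq A0 s0 n) @ [m]"
    "good_st A0 (set (fst (sq A0 s0 (Suc n)))) (snd (sq A0 s0 (Suc n)))"
    using stp_spec[of A0 "sq A0 s0 n" n] by auto
  then show ?case using Suc by simp
qed

lemma sq_prefix:
  assumes "good_st A0 (set (fst s0)) (snd s0)" "length (fst s0) = 1"
  shows "n \<le> n' \<Longrightarrow> i < Suc n \<Longrightarrow> fst (sq A0 s0 n') ! i = fst (sq A0 s0 n) ! i
     \<and> set (fst (sq A0 s0 n)) \<subseteq> set (fst (sq A0 s0 n'))"
proof (induction n' rule: dec_induct)
  case base then show ?case by simp
next
  case (step n')
  obtain m where m: "fst (sq A0 s0 (Suc n')) = fst (sq A0 s0 n') @ [m]"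
    using stp_spec[of A0 "sq A0 s0 n'" n'] sq_inv[OF assms, of n'] by auto
  have "length (fst (sq A0 s0 n')) = Suc n'" using sq_inv[OF assms] by simp
  then show ?case using step m by (auto simp: nth_append)
qed

lemma main_loc:
  assumes D0: "D0 \<subseteq> A" "D0 \<noteq> {}" "crowd D0"
  shows "\<exists>B. B \<noteq> {} \<and> B \<subseteq> A \<and> shift_increasing r B \<and>
    (\<forall>i\<in>B. \<forall>j::nat. \<exists>n\<in>B. n \<noteq> i \<and> dl i n < 1 / (real j + 1))"
proof -
  define b0 where "b0 = (LEAST n. n \<in> D0)"
  have b0: "b0 \<in> D0" unfolding b0_def using D0(2) by (metis LeastI ex_in_conv)
  have b0l: "\<And>m. m \<in> D0 \<Longrightarrow> b0 \<le> m" unfolding b0_def by (rule Least_le)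
  define s0 where "s0 = ([b0], D0)"
  have si1: "shift_increasing r {b0}" unfolding shift_increasing_def by auto
  have si2: "shift_increasing r (insert m {b0})" for m unfolding shift_increasing_def by auto
  have G0: "good_st A (set (fst s0)) (snd s0)" "length (fst s0) = 1"
    unfolding s0_def good_st_def using D0 b0 b0l si1 si2 by (auto simp: le_neq_implies_less)
  define B where "B = (\<Union>n. set (fst (sq A s0 n)))"
  note inv = sq_inv[OF G0] and pre = sq_prefix[OF G0]
  have mono: "set (fst (sq A s0 n)) \<subseteq> set (fst (sq A s0 n'))" if "n \<le> n'" for n n'
    using sq_prefix[OF G0 that, of 0] by simp
  have pre2: "fst (sq A s0 n') ! i = fst (sq A s0 n) ! i" if "n \<le> n'" "i < Suc n" for n n' i
    using sq_prefix[OF G0 that] by simp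
  have "B \<noteq> {}" unfolding B_def using G0 by (auto simp: s0_def intro!: exI[of _ 0])
  moreover have "B \<subseteq> A" unfolding B_def using inv unfolding good_st_def by blast
  moreover have "shift_increasing r B" unfolding shift_increasing_def
  proof (intro ballI impI)
    fix a b c assume abc: "a \<in> B" "b \<in> B" "c \<in> B" "a < b \<and> b < c"
    obtain na nb nc where n: "a \<in> set (fst (sq A s0 na))" "b \<in> set (fst (sq A s0 nb))"
      "c \<in> set (fst (sq A s0 nc))" using abc(1-3) unfolding B_def by blast
    define N where "N = max na (max nb nc)"
    have "a \<in> set (fst (sq A s0 N))" "b \<in> set (fst (sq A s0 N))" "c \<in> set (fst (sq A s0 N))"
      using n mono[of na N] mono[of nb N] mono[of nc N] unfolding N_def by (auto simp: le_max_iff_disj)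
    then show "r a b \<le> r b c" using inv[of N] abc(4) unfolding good_st_def shift_increasing_def by blast
  qed
  moreover have "\<forall>i\<in>B. \<forall>j::nat. \<exists>n\<in>B. n \<noteq> i \<and> dl i n < 1 / (real j + 1)"
  proof (intro ballI allI)
    fix i j assume "i \<in> B"
    then obtain n where "i \<in> set (fst (sq A s0 n))" unfolding B_def by blast
    then obtain a where a: "a < Suc n" "i = fst (sq A s0 n) ! a"
      using inv[of n] by (metis in_set_conv_nth)
    define N where "N = prod_encode (a, j)"
    have aN: "a \<le> N" unfolding N_def by (rule le_prod_encode_1)
    have iN: "fst (sq A s0 N) ! a = i"
    proof (cases "n \<le> N")
      case True then show ?thesis using pre2[of n N a] a by simp
    next
      case False then show ?thesis using pre2[of N n a] a aN by simp
    qed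
    obtain m where m: "fst (sq A s0 (Suc N)) = fst (sq A s0 N) @ [m]" "m \<notin> set (fst (sq A s0 N))"
      "dl (fst (sq A s0 N) ! a) m < 1 / (real j + 1)"
      using stp_spec[of A "sq A s0 N" N] inv[of N] unfolding N_def by auto
    have "m \<in> B" unfolding B_def using m(1) by (intro UN_I[of "Suc N"]) auto
    moreover have "m \<noteq> i" using m(2) iN inv[of N] aN by (metis le_imp_less_Suc nth_mem)
    ultimately show "\<exists>n\<in>B. n \<noteq> i \<and> dl i n < 1 / (real j + 1)" using m(3) iN by blast
  qed
  ultimately show ?thesis by blast
qed

end



lemma rat_no_iso: "\<not> openin rat_topology {q}"
proof
  assume "openin rat_topology {q}"
  then obtain U where U: "open U" "{q} = U \<inter> \<rat>" by (auto simp: openin_subtopology)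
  then have q: "q \<in> U" "q \<in> \<rat>" by auto
  then obtain e where e: "e > 0" "ball q e \<subseteq> U" using U(1) open_contains_ball by blast
  obtain s where s: "s \<in> \<rat>" "q < s" "s < q + e" using Rats_dense_in_real[of q "q + e"] e by auto
  have "s \<in> ball q e" using s by (simp add: dist_real_def)
  then have "s \<in> U \<inter> \<rat>" using e s by auto
  then show False using U(2) s by auto
qed

lemma rat_iso_transfer:
  assumes "T homeomorphic_space rat_topology" "y \<in> topspace T"
  shows "\<not> openin T {y}"
proof
  assume op: "openin T {y}"
  obtain f where f: "homeomorphic_map T rat_topology f" using assms(1) homeomorphic_space by blast
  have "openin rat_topology (f ` {y})" using homeomorphic_map_openness[OF f, of "{y}"] op assms(2) by simp
  then show False using rat_no_iso by simp
qed

lemma rat_nonempty: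
  assumes "T homeomorphic_space rat_topology" shows "topspace T \<noteq> {}"
proof -
  obtain f where f: "homeomorphic_map T rat_topology f" using assms(1) homeomorphic_space by blast
  have "f ` topspace T = \<rat>" using homeomorphic_imp_surjective_map[OF f] by simp
  then show ?thesis by auto
qed

theorem mainTheorem2:
  fixes r :: "nat \<Rightarrow> nat \<Rightarrow> nat"
    and X :: "'a topology"
    and x :: "nat \<Rightarrow> 'a"
    and d :: "'a \<Rightarrow> 'a \<Rightarrow> real"
  assumes r1: "\<And>k l m. k < l \<Longrightarrow> l < m \<Longrightarrow> r k m \<noteq> r l m"
    and r2: "\<And>k l m. k < l \<Longrightarrow> l < m \<Longrightarrow> r k l \<le> max (r k m) (r l m)"
    and r3: "\<And>k l m. k < l \<Longrightarrow> l < m \<Longrightarrow> r k m \<le> max (r k l) (r l m)"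
    and x_in: "range x \<subseteq> topspace X"
    and x_inj: "inj x"
    and x_Q: "subtopology X (range x) homeomorphic_space rat_topology"
    and d_metric: "Metric_space (range x) d"
    and d_compat: "Metric_space.mtopology (range x) d = subtopology X (range x)"
  shows "\<forall>A. \<not> scattered_idx X x A \<longrightarrow>
           (\<exists>B. B \<noteq> {} \<and> B \<subseteq> A \<and> shift_increasing r B \<and>
              (\<forall>i\<in>B. \<forall>j::nat. \<exists>n \<in> B \<inter> {n. d (x n) (x i) < 1 / (real j + 1)}. n \<noteq> i))"
proof (intro allI impI)
  fix A assume "\<not> scattered_idx X x A"
  then obtain B0 where B0: "B0 \<subseteq> A" "subtopology X (x ` B0) homeomorphic_space rat_topology"
    unfolding scattered_idx_def by blast
  interpret M: Metric_space "range x" d by (rule d_metric)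
  define dl where "dl a b = d (x a) (x b)" for a b
  interpret S: sfix r dl
  proof
    show "\<And>k l m. k < l \<Longrightarrow> l < m \<Longrightarrow> r k m \<noteq> r l m" by (rule r1)
    show "\<And>k l m. k < l \<Longrightarrow> l < m \<Longrightarrow> r k l \<le> max (r k m) (r l m)" by (rule r2)
    show "\<And>k l m. k < l \<Longrightarrow> l < m \<Longrightarrow> r k m \<le> max (r k l) (r l m)" by (rule r3)
    show "\<And>a b. dl a b = dl b a" unfolding dl_def by (rule M.commute)
    show "\<And>a b c. dl a c \<le> dl a b + dl b c" unfolding dl_def by (rule M.triangle) auto
    show "\<And>a b. a \<noteq> b \<Longrightarrow> 0 < dl a b" unfolding dl_def
      using x_inj by (intro M.mdist_pos_less) (auto dest: injD)
    show "\<And>a b. 0 \<le> dl a b" unfolding dl_def by simp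
    show "\<And>a. dl a a = 0" unfolding dl_def by simp
  qed
  have T: "subtopology X (x ` B0) = subtopology M.mtopology (x ` B0)"
    using d_compat subtopology_subtopology[of X "range x" "x ` B0"] by (simp add: image_mono inf_absorb2)
  have ne: "B0 \<noteq> {}" using rat_nonempty[OF B0(2)] by auto
  have cr: "S.crowd B0" unfolding S.crowd_def
  proof (intro ballI allI impI, rule ccontr)
    fix a and e :: real assume a: "a \<in> B0" "e > 0" and nq: "\<not> (\<exists>q\<in>B0. q \<noteq> a \<and> dl a q < e)"
    have "M.mball (x a) e \<inter> x ` B0 = {x a}"
      using nq a unfolding dl_def M.mball_def by auto
    moreover have "openin (subtopology M.mtopology (x ` B0)) (M.mball (x a) e \<inter> x ` B0)"
      by (rule openin_subtopology_Int) simp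
    ultimately have "openin (subtopology X (x ` B0)) {x a}" using T by simp
    moreover have "x a \<in> topspace (subtopology X (x ` B0))" using x_in a by auto
    ultimately show False using rat_iso_transfer[OF B0(2)] by blast
  qed
  obtain B where B: "B \<noteq> {}" "B \<subseteq> B0" "shift_increasing r B"
    "\<forall>i\<in>B. \<forall>j::nat. \<exists>n\<in>B. n \<noteq> i \<and> dl i n < 1 / (real j + 1)"
    using S.main_loc[OF subset_refl ne cr] by blast
  show "\<exists>B. B \<noteq> {} \<and> B \<subseteq> A \<and> shift_increasing r B \<and>
              (\<forall>i\<in>B. \<forall>j::nat. \<exists>n \<in> B \<inter> {n. d (x n) (x i) < 1 / (real j + 1)}. n \<noteq> i)"
  proof (intro exI[of _ B] conjI)
    show "B \<noteq> {}" "B \<subseteq> A" "shift_increasing r B" using B B0 by auto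
    show "\<forall>i\<in>B. \<forall>j::nat. \<exists>n \<in> B \<inter> {n. d (x n) (x i) < 1 / (real j + 1)}. n \<noteq> i"
      using B(4) unfolding dl_def by (metis (no_types, lifting) IntI M.commute mem_Collect_eq)
  qed
qed



end
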